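(* Let $\gamma:\mathbb{S}^3\to\mathrm{SO}(3)$ be the standard map from unit quaternions $\mathbf{q}=(q_0,q_1,q_2,q_3)$ to rotation matrices, $$\gamma(\mathbf{q})=\begin{pmatrix}1-2q_2^2-2q_3^2 & 2q_1q_2-2q_0q_3 & 2q_1q_3+2q_0q_2\\ 2q_1q_2+2q_0q_3 & 1-2q_1^2-2q_3^2 & 2q_2q_3-2q_0q_1\\ 2q_1q_3-2q_0q_2 & 2q_2q_3+2q_0q_1 & 1-2q_1^2-2q_2^2\end{pmatrix}.$$ If $\mathbf{R}\in\mathrm{SO}(3)$ follows the Rotation Laplace distribution $\mathcal{RL}(\mathbf{A})$ for some $\mathbf{A}\in\mathbb{R}^{3\times3}$, then $\mathbf{q}=\gamma^{-1}(\mathbf{R})\in\mathbb{S}^3$ follows a Quaternion Laplace distribution $\mathcal{QL}(\mathbf{M},\mathbf{Z})$ for some $\mathbf{M}\in\mathrm{O}(4)$ and some $\mathbf{Z}=\operatorname{diag}(0,z_1,z_2,z_3)$.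
   Context: Rotation Laplace distribution $\mathcal{RL}(\mathbf{A})$: for $\mathbf{A}\in\mathbb{R}^{3\times3}$ with proper SVD $\mathbf{A}=\mathbf{U}\mathbf{S}\mathbf{V}^T$, density with respect to the Haar measure on $\mathrm{SO}(3)$ normalized to total mass $1$ given by $p(\mathbf{R};\mathbf{A})=\frac{1}{F(\mathbf{A})}\exp(-\sqrt{\operatorname{tr}(\mathbf{S}-\mathbf{A}^T\mathbf{R})})/\sqrt{\operatorname{tr}(\mathbf{S}-\mathbf{A}^T\mathbf{R})}$. Proper SVD: from an ordinary SVD $\mathbf{A}=\mathbf{U}'\operatorname{diag}(s_1',s_2',s_3')(\mathbf{V}')^T$, set $\mathbf{U}=\mathbf{U}'\operatorname{diag}(1,1,\det\mathbf{U}')$, $\mathbf{V}=\mathbf{V}'\operatorname{diag}(1,1,\det\mathbf{V}')$, $\mathbf{S}=\operatorname{diag}(s_1',s_2',\det(\mathbf{U}'\mathbf{V}')s_3')$. Quaternion Laplace distribution $\mathcal{QL}(\mathbf{M},\mathbf{Z})$ with $\mathbf{M}\in\mathrm{O}(4)$, $\mathbf{Z}=\operatorname{diag}(0,z_1,z_2,z_3)$: density on $\mathbb{S}^3$ (w.r.t. surface measure) proportional to $\exp(-\sqrt{-\mathbf{q}^T\mathbf{M}\mathbf{Z}\mathbf{M}^T\mathbf{q}})/\sqrt{-\mathbf{q}^T\mathbf{M}\mathbf{Z}\mathbf{M}^T\mathbf{q}}$. Since $\gamma(\mathbf{q})=\gamma(-\mathbf{q})$, $\gamma^{-1}(\mathbf{R})$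 denotes a preimage quaternion (the distributions involved are antipodally symmetric). *)

theory Defs
  imports "HOL-Probability.Probability"
begin

definition SO3 :: "(real^3^3) set" where
  "SO3 = {R. orthogonal_matrix R \<and> det R = 1}"

definition S3 :: "(real^4) set" where
  "S3 = sphere 0 1"

definition diag3 :: "real^3 \<Rightarrow> real^3^3" where
  "diag3 s = (\<chi> i j. if i = j then s $ i else 0)"

definition diag4 :: "real^4 \<Rightarrow> real^4^4" where
  "diag4 s = (\<chi> i j. if i = j then s $ i else 0)"

definition quat_to_rot :: "real^4 \<Rightarrow> real^3^3" where
  "quat_to_rot q = (let q0 = q$1; q1 = q$2; q2 = q$3; q3 = q$4 in
     vector [
       vector [1 - 2*q2^2 - 2*q3^2, 2*q1*q2 - 2*q0*q3, 2*q1*q3 + 2*q0*q2],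
       vector [2*q1*q2 + 2*q0*q3, 1 - 2*q1^2 - 2*q3^2, 2*q2*q3 - 2*q0*q1],
       vector [2*q1*q3 - 2*q0*q2, 2*q2*q3 + 2*q0*q1, 1 - 2*q1^2 - 2*q2^2]])"

definition Haar_SO3 :: "(real^3^3) measure" where
  "Haar_SO3 = (THE \<mu>. prob_space \<mu> \<and> sets \<mu> = sets (restrict_space borel SO3) \<and>
      (\<forall>Q\<in>SO3. distr \<mu> \<mu> (\<lambda>R. Q ** R) = \<mu>))"

text \<open>Normalized surface measure on S^3, realised as the cone measure:
  the image of the uniform distribution on the unit ball under radial projection.\<close>
definition unif_S3 :: "(real^4) measure" where
  "unif_S3 = distr (uniform_measure lborel (cball 0 1)) (restrict_space borel S3)
      (\<lambda>x. if x = 0 then axis 1 1 else x /\<^sub>R norm x)"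

definition ordinary_svd :: "real^3^3 \<Rightarrow> real^3^3 \<Rightarrow> real^3 \<Rightarrow> real^3^3 \<Rightarrow> bool" where
  "ordinary_svd A U s V \<longleftrightarrow> orthogonal_matrix U \<and> orthogonal_matrix V \<and>
      s$1 \<ge> s$2 \<and> s$2 \<ge> s$3 \<and> s$3 \<ge> 0 \<and> A = U ** diag3 s ** transpose V"

definition proper_svd_S :: "real^3^3 \<Rightarrow> real^3^3" where
  "proper_svd_S A = (let (U', s, V') = (SOME (U', s, V'). ordinary_svd A U' s V') in
      diag3 (vector [s$1, s$2, det (U' ** V') * s$3]))"

definition RL_f :: "real^3^3 \<Rightarrow> real^3^3 \<Rightarrow> real" where
  "RL_f A R = (let t = trace (proper_svd_S A - transpose A ** R) in exp (- sqrt t) / sqrt t)"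

definition RL :: "real^3^3 \<Rightarrow> (real^3^3) measure" where
  "RL A = density Haar_SO3
      (\<lambda>R. ennreal (RL_f A R / (\<integral>R'. RL_f A R' \<partial>Haar_SO3)))"

definition QL_f :: "real^4^4 \<Rightarrow> real^4^4 \<Rightarrow> real^4 \<Rightarrow> real" where
  "QL_f M Z q = (let t = - (q \<bullet> ((M ** Z ** transpose M) *v q)) in exp (- sqrt t) / sqrt t)"

definition QL :: "real^4^4 \<Rightarrow> real^4^4 \<Rightarrow> (real^4) measure" where
  "QL M Z = density unif_S3
      (\<lambda>q. ennreal (QL_f M Z q / (\<integral>q'. QL_f M Z q' \<partial>unif_S3)))"

end

theory Submission
  imports Defs
begin



lemma vector_4 [simp]:
 "(vector [x,y,z,w] ::('a::zero)^4)$1 = x"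
 "(vector [x,y,z,w] ::('a::zero)^4)$2 = y"
 "(vector [x,y,z,w] ::('a::zero)^4)$3 = z"
 "(vector [x,y,z,w] ::('a::zero)^4)$4 = w"
  unfolding vector_def by simp_all

definition qmul :: "real^4 \<Rightarrow> real^4 \<Rightarrow> real^4" where
 "qmul a b = vector [a$1*b$1 - a$2*b$2 - a$3*b$3 - a$4*b$4,
                     a$1*b$2 + a$2*b$1 + a$3*b$4 - a$4*b$3,
                     a$1*b$3 - a$2*b$4 + a$3*b$1 + a$4*b$2,
                     a$1*b$4 + a$2*b$3 - a$3*b$2 + a$4*b$1]"

definition qconj :: "real^4 \<Rightarrow> real^4" where
 "qconj a = vector [a$1, -a$2, -a$3, -a$4]"

definition sumsq :: "real^4 \<Rightarrow> real" where
 "sumsq q = q$1^2 + q$2^2 + q$3^2 + q$4^2"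

definition gh :: "real^4 \<Rightarrow> real^3^3" where
  "gh q = (let q0 = q$1; q1 = q$2; q2 = q$3; q3 = q$4 in
     vector [
       vector [q0^2+q1^2-q2^2-q3^2, 2*q1*q2 - 2*q0*q3, 2*q1*q3 + 2*q0*q2],
       vector [2*q1*q2 + 2*q0*q3, q0^2-q1^2+q2^2-q3^2, 2*q2*q3 - 2*q0*q1],
       vector [2*q1*q3 - 2*q0*q2, 2*q2*q3 + 2*q0*q1, q0^2-q1^2-q2^2+q3^2]])"

lemma gh_mul: "gh (qmul a b) = gh a ** gh b"
  unfolding vec_eq_iff forall_3
  by (simp add: gh_def qmul_def matrix_matrix_mult_def sum_3 Let_def power2_eq_square algebra_simps)

lemma gh_conj: "gh (qconj a) = transpose (gh a)"
  unfolding vec_eq_iff forall_3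
  by (simp add: gh_def qconj_def transpose_def Let_def power2_eq_square algebra_simps)

lemma sumsq_norm: "norm q ^ 2 = sumsq q"
  by (simp only: power2_norm_eq_inner) (simp add: inner_vec_def sum_4 sumsq_def power2_eq_square)

lemma S3_iff: "q \<in> S3 \<longleftrightarrow> sumsq q = 1"
proof -
  have "norm q = 1 \<longleftrightarrow> norm q ^ 2 = 1"
    by (metis norm_ge_zero power_one real_root_pos2 real_sqrt_unique sqrt_le_D zero_le_one one_power2)
  then show ?thesis by (simp add: S3_def sumsq_norm)
qed

lemma rot_gh: assumes "q \<in> S3" shows "quat_to_rot q = gh q"
proof -
  have h: "q$1^2 + q$2^2 + q$3^2 + q$4^2 = 1" using assms by (simp add: S3_iff sumsq_def)
  show ?thesis unfolding vec_eq_iff forall_3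
    by (simp add: gh_def quat_to_rot_def Let_def, insert h, algebra)
qed

lemma sumsq_qmul: "sumsq (qmul a b) = sumsq a * sumsq b"
  by (simp add: sumsq_def qmul_def power2_eq_square algebra_simps)

lemma sumsq_qconj: "sumsq (qconj a) = sumsq a"
  by (simp add: sumsq_def qconj_def)

lemma qmul_S3: "a \<in> S3 \<Longrightarrow> b \<in> S3 \<Longrightarrow> qmul a b \<in> S3"
  by (simp add: S3_iff sumsq_qmul)

lemma qconj_S3: "a \<in> S3 \<Longrightarrow> qconj a \<in> S3"
  by (simp add: S3_iff sumsq_qconj)

lemma rot_mul: "a \<in> S3 \<Longrightarrow> b \<in> S3 \<Longrightarrow> quat_to_rot (qmul a b) = quat_to_rot a ** quat_to_rot b"
  by (simp add: rot_gh qmul_S3 gh_mul)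

lemma rot_conj: "quat_to_rot (qconj a) = transpose (quat_to_rot a)"
  unfolding vec_eq_iff forall_3
  by (simp add: quat_to_rot_def qconj_def transpose_def Let_def power2_eq_square algebra_simps)

lemma gh_orth: "transpose (gh q) ** gh q = (sumsq q)^2 *\<^sub>R mat 1"
  unfolding vec_eq_iff forall_3
  by (simp add: gh_def sumsq_def transpose_def matrix_matrix_mult_def sum_3 mat_def Let_def power2_eq_square algebra_simps)

lemma gh_det: "det (gh q) = (sumsq q)^3"
  by (simp add: det_3 gh_def sumsq_def Let_def power2_eq_square power3_eq_cube algebra_simps)

lemma rot_SO3: assumes "q \<in> S3" shows "quat_to_rot q \<in> SO3"
proof -
  have "sumsq q = 1" using assms S3_iff by auto
  then show ?thesis using gh_orth[of q] gh_det[of q]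
    by (simp add: SO3_def rot_gh[OF assms] orthogonal_matrix)
qed




definition cofm :: "real^3^3 \<Rightarrow> real^3^3" where
 "cofm R = vector [
    vector [R$2$2*R$3$3 - R$2$3*R$3$2, R$2$3*R$3$1 - R$2$1*R$3$3, R$2$1*R$3$2 - R$2$2*R$3$1],
    vector [R$1$3*R$3$2 - R$1$2*R$3$3, R$1$1*R$3$3 - R$1$3*R$3$1, R$1$2*R$3$1 - R$1$1*R$3$2],
    vector [R$1$2*R$2$3 - R$1$3*R$2$2, R$1$3*R$2$1 - R$1$1*R$2$3, R$1$1*R$2$2 - R$1$2*R$2$1]]"

lemma cofm_mul: "transpose (cofm R) ** R = det R *\<^sub>R mat 1"
  unfolding vec_eq_iff forall_3
  by (simp add: cofm_def det_3 transpose_def matrix_matrix_mult_def sum_3 mat_def algebra_simps)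

lemma SO3_cof: assumes "R \<in> SO3" shows "cofm R = R"
proof -
  have o: "R ** transpose R = mat 1" "det R = 1" using assms by (auto simp: SO3_def orthogonal_matrix_def)
  have "transpose (cofm R) = transpose (cofm R) ** (R ** transpose R)" using o by simp
  also have "\<dots> = (transpose (cofm R) ** R) ** transpose R" by (simp only: matrix_mul_assoc)
  also have "\<dots> = transpose R" using o cofm_mul[of R] by simp
  finally show ?thesis by (metis transpose_transpose)
qed

lemma SO3_eqs: assumes "R \<in> SO3"
  shows "R$1$1 = R$2$2*R$3$3 - R$2$3*R$3$2" "R$1$2 = R$2$3*R$3$1 - R$2$1*R$3$3" "R$1$3 = R$2$1*R$3$2 - R$2$2*R$3$1"
    "R$2$1 = R$1$3*R$3$2 - R$1$2*R$3$3" "R$2$2 = R$1$1*R$3$3 - R$1$3*R$3$1" "R$2$3 = R$1$2*R$3$1 - R$1$1*R$3$2"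
    "R$3$1 = R$1$2*R$2$3 - R$1$3*R$2$2" "R$3$2 = R$1$3*R$2$1 - R$1$1*R$2$3" "R$3$3 = R$1$1*R$2$2 - R$1$2*R$2$1"
    "R$1$1^2+R$2$1^2+R$3$1^2 = 1" "R$1$2^2+R$2$2^2+R$3$2^2 = 1" "R$1$3^2+R$2$3^2+R$3$3^2 = 1"
    "R$1$1*R$1$2+R$2$1*R$2$2+R$3$1*R$3$2 = 0" "R$1$1*R$1$3+R$2$1*R$2$3+R$3$1*R$3$3 = 0"
    "R$1$2*R$1$3+R$2$2*R$2$3+R$3$2*R$3$3 = 0"
    "R$1$1^2+R$1$2^2+R$1$3^2 = 1" "R$2$1^2+R$2$2^2+R$2$3^2 = 1" "R$3$1^2+R$3$2^2+R$3$3^2 = 1"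
    "R$1$1*R$2$1+R$1$2*R$2$2+R$1$3*R$2$3 = 0" "R$1$1*R$3$1+R$1$2*R$3$2+R$1$3*R$3$3 = 0"
    "R$2$1*R$3$1+R$2$2*R$3$2+R$2$3*R$3$3 = 0"
proof -
  have c: "cofm R = R" by (rule SO3_cof[OF assms])
  have o1: "transpose R ** R = mat 1" and o2: "R ** transpose R = mat 1"
    using assms by (auto simp: SO3_def orthogonal_matrix_def)
  have e1: "(transpose R ** R)$i$j = mat 1 $i$j" for i j using o1 by simp
  have e2: "(R ** transpose R)$i$j = mat 1 $i$j" for i j using o2 by simp
  have e3: "cofm R $i$j = R$i$j" for i j using c by simp
  note ee = e1[simplified matrix_matrix_mult_def transpose_def mat_def sum_3, simplified]
            e2[simplified matrix_matrix_mult_def transpose_def mat_def sum_3, simplified]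
            e3[simplified cofm_def]
  show "R$1$1 = R$2$2*R$3$3 - R$2$3*R$3$2" "R$1$2 = R$2$3*R$3$1 - R$2$1*R$3$3" "R$1$3 = R$2$1*R$3$2 - R$2$2*R$3$1"
    "R$2$1 = R$1$3*R$3$2 - R$1$2*R$3$3" "R$2$2 = R$1$1*R$3$3 - R$1$3*R$3$1" "R$2$3 = R$1$2*R$3$1 - R$1$1*R$3$2"
    "R$3$1 = R$1$2*R$2$3 - R$1$3*R$2$2" "R$3$2 = R$1$3*R$2$1 - R$1$1*R$2$3" "R$3$3 = R$1$1*R$2$2 - R$1$2*R$2$1"
    using e3[of 1 1] e3[of 1 2] e3[of 1 3] e3[of 2 1] e3[of 2 2] e3[of 2 3] e3[of 3 1] e3[of 3 2] e3[of 3 3]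
    by (simp_all add: cofm_def)
  show "R$1$1^2+R$2$1^2+R$3$1^2 = 1" "R$1$2^2+R$2$2^2+R$3$2^2 = 1" "R$1$3^2+R$2$3^2+R$3$3^2 = 1"
    "R$1$1*R$1$2+R$2$1*R$2$2+R$3$1*R$3$2 = 0" "R$1$1*R$1$3+R$2$1*R$2$3+R$3$1*R$3$3 = 0"
    "R$1$2*R$1$3+R$2$2*R$2$3+R$3$2*R$3$3 = 0"
    using e1[of 1 1] e1[of 2 2] e1[of 3 3] e1[of 1 2] e1[of 1 3] e1[of 2 3]
    by (simp_all add: matrix_matrix_mult_def transpose_def mat_def sum_3 power2_eq_square)
  show "R$1$1^2+R$1$2^2+R$1$3^2 = 1" "R$2$1^2+R$2$2^2+R$2$3^2 = 1" "R$3$1^2+R$3$2^2+R$3$3^2 = 1"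
    "R$1$1*R$2$1+R$1$2*R$2$2+R$1$3*R$2$3 = 0" "R$1$1*R$3$1+R$1$2*R$3$2+R$1$3*R$3$3 = 0"
    "R$2$1*R$3$1+R$2$2*R$3$2+R$2$3*R$3$3 = 0"
    using e2[of 1 1] e2[of 2 2] e2[of 3 3] e2[of 1 2] e2[of 1 3] e2[of 2 3]
    by (simp_all add: matrix_matrix_mult_def transpose_def mat_def sum_3 power2_eq_square)
qed

lemma gh_scale: "gh (c *\<^sub>R p) = (c^2) *\<^sub>R gh p"
  unfolding vec_eq_iff forall_3
  by (simp add: gh_def Let_def power2_eq_square algebra_simps)

lemma sumsq_scale: "sumsq (c *\<^sub>R p) = c^2 * sumsq p"
  by (simp add: sumsq_def power2_eq_square algebra_simps)

lemma surj_pos: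
  assumes R: "R \<in> SO3" and w: "1 + R$1$1 + R$2$2 + R$3$3 > 0"
  shows "\<exists>q\<in>S3. quat_to_rot q = R"
proof -
  define w where "w = 1 + R$1$1 + R$2$2 + R$3$3"
  define p :: "real^4" where "p = vector [w, R$3$2 - R$2$3, R$1$3 - R$3$1, R$2$1 - R$1$2]"
  define q where "q = (1 / (2 * sqrt w)) *\<^sub>R p"
  note e = SO3_eqs[OF R]
  have wpos: "w > 0" using w w_def by simp
  have sp: "sumsq p = 4 * w"
    unfolding p_def sumsq_def w_def apply simp using e by algebra
  have gp: "gh p = (4 * w) *\<^sub>R R"
    unfolding vec_eq_iff forall_3 p_def w_def
    apply (simp add: gh_def Let_def)
    apply (intro conjI)
    using e by algebra+
  have c2: "(1 / (2 * sqrt w))^2 = 1 / (4 * w)"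
    using wpos by (simp add: power2_eq_square field_simps)
  have "sumsq q = 1" unfolding q_def sumsq_scale c2 sp using wpos by simp
  then have qS: "q \<in> S3" by (simp add: S3_iff)
  have "quat_to_rot q = gh q" by (rule rot_gh[OF qS])
  also have "\<dots> = R" unfolding q_def gh_scale c2 gp using wpos by simp
  finally have "quat_to_rot q = R" .
  then show ?thesis using qS by blast
qed

lemma SO3_mul: "A \<in> SO3 \<Longrightarrow> B \<in> SO3 \<Longrightarrow> A ** B \<in> SO3"
  by (simp add: SO3_def orthogonal_matrix_mul det_mul)

lemma surj_shift:
  assumes R: "R \<in> SO3" and e: "e \<in> S3" and ee: "quat_to_rot e ** quat_to_rot e = mat 1"
    and w: "1 + (quat_to_rot e ** R)$1$1 + (quat_to_rot e ** R)$2$2 + (quat_to_rot e ** R)$3$3 > 0"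
  shows "\<exists>q\<in>S3. quat_to_rot q = R"
proof -
  have "quat_to_rot e ** R \<in> SO3" using SO3_mul rot_SO3[OF e] R by blast
  then obtain p where p: "p \<in> S3" "quat_to_rot p = quat_to_rot e ** R" using surj_pos w by blast
  have "quat_to_rot (qmul e p) = quat_to_rot e ** (quat_to_rot e ** R)" using rot_mul[OF e p(1)] p(2) by simp
  also have "\<dots> = R" using ee by (simp add: matrix_mul_assoc)
  finally show ?thesis using qmul_S3[OF e p(1)] by blast
qed

lemma rot_surj:
  assumes R: "R \<in> SO3" shows "\<exists>q\<in>S3. quat_to_rot q = R"
proof -
  define e1 :: "real^4" where "e1 = vector [1,0,0,0]"
  define e2 :: "real^4" where "e2 = vector [0,1,0,0]"
  define e3 :: "real^4" where "e3 = vector [0,0,1,0]"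
  define e4 :: "real^4" where "e4 = vector [0,0,0,1]"
  have S: "e1 \<in> S3" "e2 \<in> S3" "e3 \<in> S3" "e4 \<in> S3"
    by (simp_all add: S3_iff sumsq_def e1_def e2_def e3_def e4_def)
  have sq: "quat_to_rot e ** quat_to_rot e = mat 1" if "e \<in> {e1,e2,e3,e4}" for e
    using that unfolding vec_eq_iff forall_3
    by (auto simp: e1_def e2_def e3_def e4_def quat_to_rot_def matrix_matrix_mult_def sum_3 mat_def)
  have t: "(quat_to_rot e1 ** R)$1$1 = R$1$1" "(quat_to_rot e1 ** R)$2$2 = R$2$2" "(quat_to_rot e1 ** R)$3$3 = R$3$3"
     "(quat_to_rot e2 ** R)$1$1 = R$1$1" "(quat_to_rot e2 ** R)$2$2 = -R$2$2" "(quat_to_rot e2 ** R)$3$3 = -R$3$3"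
     "(quat_to_rot e3 ** R)$1$1 = -R$1$1" "(quat_to_rot e3 ** R)$2$2 = R$2$2" "(quat_to_rot e3 ** R)$3$3 = -R$3$3"
     "(quat_to_rot e4 ** R)$1$1 = -R$1$1" "(quat_to_rot e4 ** R)$2$2 = -R$2$2" "(quat_to_rot e4 ** R)$3$3 = R$3$3"
    by (simp_all add: e1_def e2_def e3_def e4_def quat_to_rot_def matrix_matrix_mult_def sum_3)
  have "1 + R$1$1 + R$2$2 + R$3$3 > 0 \<or> 1 + R$1$1 - R$2$2 - R$3$3 > 0 \<or>
        1 - R$1$1 + R$2$2 - R$3$3 > 0 \<or> 1 - R$1$1 - R$2$2 + R$3$3 > 0" by linarith
  then show ?thesis
  proof (elim disjE)
    assume "1 + R$1$1 + R$2$2 + R$3$3 > 0" then show ?thesis using surj_shift[OF R S(1) sq] t by simp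
  next
    assume "1 + R$1$1 - R$2$2 - R$3$3 > 0" then show ?thesis using surj_shift[OF R S(2) sq] t by simp
  next
    assume "1 - R$1$1 + R$2$2 - R$3$3 > 0" then show ?thesis using surj_shift[OF R S(3) sq] t by simp
  next
    assume "1 - R$1$1 - R$2$2 + R$3$3 > 0" then show ?thesis using surj_shift[OF R S(4) sq] t by simp
  qed
qed




lemma sumsq_nonneg: "sumsq q \<ge> 0" by (simp add: sumsq_def)

lemma norm_sumsq: "norm q = sqrt (sumsq q)"
  by (metis norm_ge_zero real_sqrt_unique sumsq_norm)

lemma qmul_linear_aux:
  "qmul c (qmul (x + y) d) = qmul c (qmul x d) + qmul c (qmul y d)"
  "qmul c (qmul (r *\<^sub>R x) d) = r *\<^sub>R qmul c (qmul x d)"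
  unfolding vec_eq_iff forall_4 by (simp_all add: qmul_def algebra_simps)

lemma transpose_diag3: "transpose (diag3 s) = diag3 s"
  by (simp add: diag3_def transpose_def vec_eq_iff)

lemma trace_diag3_rot:
  "trace (diag3 s - diag3 s ** quat_to_rot p) =
     2*(s$2+s$3)*(p$2)^2 + 2*(s$1+s$3)*(p$3)^2 + 2*(s$1+s$2)*(p$4)^2"
  by (simp add: trace_def sum_3 diag3_def matrix_matrix_mult_def quat_to_rot_def Let_def algebra_simps)

lemma quad_diag4:
  "p \<bullet> (diag4 (vector [0,z1,z2,z3]) *v p) = z1*(p$2)^2 + z2*(p$3)^2 + z3*(p$4)^2"
  by (simp add: inner_vec_def sum_4 diag4_def matrix_vector_mult_def power2_eq_square algebra_simps
       if_distrib cong: if_cong)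

lemma key:
  assumes U: "U \<in> SO3" and V: "V \<in> SO3" and A: "A = U ** diag3 s ** transpose V"
  shows "\<exists>M z1 z2 z3. orthogonal_matrix M \<and> (\<forall>q\<in>S3.
     trace (diag3 s - transpose A ** quat_to_rot q) =
     - (q \<bullet> ((M ** diag4 (vector [0,z1,z2,z3]) ** transpose M) *v q)))"
proof -
  obtain u where u: "u \<in> S3" "quat_to_rot u = U" using rot_surj[OF U] by blast
  obtain v where v: "v \<in> S3" "quat_to_rot v = V" using rot_surj[OF V] by blast
  define f where "f q = qmul (qconj u) (qmul q v)" for q
  have lin: "linear f"
    by (rule linearI) (simp_all add: f_def qmul_linear_aux)
  have su: "sumsq u = 1" "sumsq v = 1" using u v by (simp_all add: S3_iff)
  have nf: "norm (f q) = norm q" for q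
    by (simp add: norm_sumsq f_def sumsq_qmul sumsq_qconj su)
  have ot: "orthogonal_transformation f" using lin nf by (simp add: orthogonal_transformation)
  have om: "orthogonal_matrix (matrix f)" using ot orthogonal_transformation_matrix by blast
  have mw: "matrix f *v q = f q" for q
    using lin by (simp add: matrix_works)
  define M where "M = transpose (matrix f)"
  define z1 where "z1 = -2*(s$2+s$3)"
  define z2 where "z2 = -2*(s$1+s$3)"
  define z3 where "z3 = -2*(s$1+s$2)"
  have "trace (diag3 s - transpose A ** quat_to_rot q) =
     - (q \<bullet> ((M ** diag4 (vector [0,z1,z2,z3]) ** transpose M) *v q))" if q: "q \<in> S3" for q
  proof -
    define p where "p = f q"
    have pS: "p \<in> S3" using q u v by (simp add: p_def f_def qmul_S3 qconj_S3)
    have rp: "quat_to_rot p = transpose U ** (quat_to_rot q ** V)"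
      unfolding p_def f_def using u v q
      by (simp add: rot_mul qmul_S3 qconj_S3 rot_conj)
    have tA: "transpose A = V ** (diag3 s ** transpose U)"
      unfolding A matrix_transpose_mul transpose_transpose transpose_diag3 by (simp only: matrix_mul_assoc)
    have "transpose A ** quat_to_rot q = V ** (diag3 s ** (transpose U ** quat_to_rot q))"
      unfolding tA by (simp only: matrix_mul_assoc)
    then have "trace (transpose A ** quat_to_rot q) = trace ((diag3 s ** (transpose U ** quat_to_rot q)) ** V)"
      by (metis trace_mul_sym)
    also have "(diag3 s ** (transpose U ** quat_to_rot q)) ** V = diag3 s ** quat_to_rot p"
      unfolding rp by (simp only: matrix_mul_assoc)
    finally have "trace (diag3 s - transpose A ** quat_to_rot q) = trace (diag3 s - diag3 s ** quat_to_rot p)"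
      by (simp add: trace_sub)
    also have "\<dots> = 2*(s$2+s$3)*(p$2)^2 + 2*(s$1+s$3)*(p$3)^2 + 2*(s$1+s$2)*(p$4)^2"
      by (rule trace_diag3_rot)
    also have "\<dots> = - (p \<bullet> (diag4 (vector [0,z1,z2,z3]) *v p))"
      by (simp add: quad_diag4 z1_def z2_def z3_def algebra_simps)
    also have "p \<bullet> (diag4 (vector [0,z1,z2,z3]) *v p) = q \<bullet> ((M ** diag4 (vector [0,z1,z2,z3]) ** transpose M) *v q)"
    proof -
      have "q \<bullet> ((M ** diag4 (vector [0,z1,z2,z3]) ** transpose M) *v q)
          = q \<bullet> (M *v (diag4 (vector [0,z1,z2,z3]) *v (transpose M *v q)))"
        by (simp only: matrix_vector_mul_assoc matrix_mul_assoc)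
      also have "\<dots> = (q v* M) \<bullet> (diag4 (vector [0,z1,z2,z3]) *v (transpose M *v q))"
        by (simp add: dot_lmul_matrix)
      also have "\<dots> = p \<bullet> (diag4 (vector [0,z1,z2,z3]) *v p)"
        by (simp add: M_def mw p_def)
      finally show ?thesis by simp
    qed
    finally show ?thesis .
  qed
  moreover have "orthogonal_matrix M" using om by (simp add: M_def)
  ultimately show ?thesis by blast
qed




lemma lag:
  fixes A :: "real^3^3"
  assumes max: "\<And>t. norm (A *v (v + t *\<^sub>R w))^2 \<le> lam * norm (v + t *\<^sub>R w)^2"
    and v: "norm v = 1" "norm (A *v v)^2 = lam" and vw: "v \<bullet> w = 0"
  shows "(A *v v) \<bullet> (A *v w) = 0"
proof -
  define c where "c = (A *v v) \<bullet> (A *v w)"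
  define K where "K = norm (A *v w)^2 - lam * norm w ^2"
  have ex: "norm (A *v (v + t *\<^sub>R w))^2 = lam + 2*t*c + t^2 * norm (A *v w)^2" for t
  proof -
    have vv: "(A *v v) \<bullet> (A *v v) = lam" using v(2) by (simp only: power2_norm_eq_inner)
    have ww: "(A *v w) \<bullet> (A *v w) = norm (A *v w)^2" by (simp only: power2_norm_eq_inner)
    have "norm (A *v (v + t *\<^sub>R w))^2 = (A *v v + t *\<^sub>R (A *v w)) \<bullet> (A *v v + t *\<^sub>R (A *v w))"
      by (simp only: power2_norm_eq_inner matrix_vector_right_distrib matrix_vector_mult_scaleR)
    also have "\<dots> = (A *v v) \<bullet> (A *v v) + 2*t*c + t^2 * ((A *v w) \<bullet> (A *v w))"
      unfolding c_def by (simp add: inner_add_left inner_add_right inner_commute power2_eq_square algebra_simps)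
    finally show ?thesis unfolding vv ww .
  qed
  have nv: "norm (v + t *\<^sub>R w)^2 = 1 + t^2 * norm w ^2" for t
  proof -
    have vv: "v \<bullet> v = 1" using v(1) by (metis inner_real_def norm_eq_sqrt_inner real_sqrt_eq_1_iff)
    have ww: "w \<bullet> w = norm w ^2" by (simp only: power2_norm_eq_inner)
    have "norm (v + t *\<^sub>R w)^2 = (v + t *\<^sub>R w) \<bullet> (v + t *\<^sub>R w)" by (simp only: power2_norm_eq_inner)
    also have "\<dots> = v \<bullet> v + 2*t*(v \<bullet> w) + t^2 * (w \<bullet> w)"
      by (simp add: inner_add_left inner_add_right inner_commute power2_eq_square algebra_simps)
    finally show ?thesis unfolding vv ww vw by simp
  qed
  have ineq: "2*t*c + t^2 * K \<le> 0" for t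
    using max[of t] unfolding ex nv K_def by (simp add: algebra_simps)
  define t where "t = c / (\<bar>K\<bar> + 1)"
  have pos: "\<bar>K\<bar> + 1 > 0" by simp
  have "2*t*c + t^2 * K = c^2 * (2*(\<bar>K\<bar>+1) + K) / (\<bar>K\<bar>+1)^2"
  proof -
    define a where "a = \<bar>K\<bar> + 1"
    have "a > 0" using pos a_def by simp
    then have "2*(c/a)*c + (c/a)^2 * K = c^2 * (2*a + K) / a^2"
      by (simp add: field_simps power2_eq_square)
    then show ?thesis unfolding t_def a_def .
  qed
  moreover have "2*(\<bar>K\<bar>+1) + K > 0" by (simp add: abs_if)
  ultimately have "c^2 * (2*(\<bar>K\<bar>+1) + K) / (\<bar>K\<bar>+1)^2 \<le> 0" using ineq[of t] by simp
  then have "c^2 * (2*(\<bar>K\<bar>+1) + K) \<le> 0" using pos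
    by (simp add: divide_le_0_iff)
  then have "c^2 \<le> 0" using \<open>2*(\<bar>K\<bar>+1) + K > 0\<close>
    by (simp add: mult_le_0_iff)
  then show ?thesis unfolding c_def by simp
qed

lemma max_on:
  fixes A :: "real^3^3" and S :: "(real^3) set"
  assumes "closed S" "S \<subseteq> sphere 0 1" "S \<noteq> {}"
  shows "\<exists>v\<in>S. \<forall>x\<in>S. norm (A *v x)^2 \<le> norm (A *v v)^2"
proof -
  have "compact S" using assms(1,2) by (meson bounded_subset bounded_sphere compact_eq_bounded_closed)
  moreover have "continuous_on S (\<lambda>x. norm (A *v x)^2)"
    by (intro continuous_intros)
  ultimately show ?thesis using continuous_attains_sup[OF _ assms(3)] by blast
qed

definition cr :: "real^3 \<Rightarrow> real^3 \<Rightarrow> real^3" where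
  "cr a b = vector [a$2 * b$3 - a$3 * b$2, a$3 * b$1 - a$1 * b$3, a$1 * b$2 - a$2 * b$1]"

lemma inner3: "(x::real^3) \<bullet> y = x$1*y$1 + x$2*y$2 + x$3*y$3"
  by (simp add: inner_vec_def sum_3)

lemma cr_orth: "a \<bullet> cr a b = 0" "b \<bullet> cr a b = 0"
  by (simp_all add: inner3 cr_def algebra_simps)

lemma cr_norm: "cr a b \<bullet> cr a b = (a \<bullet> a) * (b \<bullet> b) - (a \<bullet> b)^2"
  by (simp add: inner3 cr_def power2_eq_square algebra_simps)

lemma cr_basis_nonzero:
  "u \<noteq> 0 \<Longrightarrow> cr u (axis 1 1) \<noteq> 0 \<or> cr u (axis 2 1) \<noteq> 0 \<or> cr u (axis 3 1) \<noteq> 0"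
proof (rule ccontr)
  assume u: "u \<noteq> 0" and h: "\<not> (cr u (axis 1 1) \<noteq> 0 \<or> cr u (axis 2 1) \<noteq> 0 \<or> cr u (axis 3 1) \<noteq> 0)"
  have c: "cr u (axis 1 1) $ 2 = u$3" "cr u (axis 1 1) $ 3 = - u$2" "cr u (axis 2 1) $ 3 = u$1"
    by (simp_all add: cr_def axis_def)
  then have "u$1 = 0" "u$2 = 0" "u$3 = 0" using h by auto
  then have "u = 0" by (simp add: vec_eq_iff forall_3)
  then show False using u by simp
qed

lemma unit_orth_exists:
  fixes u :: "real^3" assumes "norm u = 1" shows "\<exists>w. norm w = 1 \<and> u \<bullet> w = 0"
proof -
  have "u \<noteq> 0" using assms by auto
  then obtain b where b: "cr u b \<noteq> 0" using cr_basis_nonzero by blast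
  define w where "w = (1 / norm (cr u b)) *\<^sub>R cr u b"
  have "norm w = 1" using b by (simp add: w_def)
  moreover have "u \<bullet> w = 0" by (simp add: w_def cr_orth)
  ultimately show ?thesis by blast
qed

lemma hom_max:
  fixes A :: "real^3^3"
  assumes max: "\<And>y. norm y = 1 \<Longrightarrow> P y \<Longrightarrow> norm (A *v y)^2 \<le> lam"
    and sc: "\<And>x c. P x \<Longrightarrow> P (c *\<^sub>R x)" and Px: "P x"
  shows "norm (A *v x)^2 \<le> lam * norm x ^2"
proof (cases "x = 0")
  case True
  then show ?thesis by simp
next
  case False
  define y where "y = (1 / norm x) *\<^sub>R x"
  have "norm y = 1" using False by (simp add: y_def)
  then have "norm (A *v y)^2 \<le> lam" using max sc[OF Px] y_def by blast
  moreover have "norm (A *v y)^2 = norm (A *v x)^2 / norm x ^2"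
    by (simp add: y_def matrix_vector_mult_scaleR power_divide)
  ultimately show ?thesis using False by (simp add: field_simps)
qed

lemma gram_orth:
  fixes v1 v2 v3 :: "real^3"
  assumes "v1 \<bullet> v1 = 1" "v2 \<bullet> v2 = 1" "v3 \<bullet> v3 = 1" "v1 \<bullet> v2 = 0" "v1 \<bullet> v3 = 0" "v2 \<bullet> v3 = 0"
  shows "orthogonal_matrix (transpose (vector [v1, v2, v3] :: real^3^3))"
proof -
  have "vector [v1, v2, v3] ** transpose (vector [v1, v2, v3] :: real^3^3) = mat 1"
    using assms unfolding vec_eq_iff forall_3
    by (simp add: matrix_matrix_mult_def sum_3 transpose_def mat_def inner3 algebra_simps)
  then show ?thesis by (simp add: orthogonal_matrix)
qed

lemma svd_exists: fixes A :: "real^3^3" shows "\<exists>U s V. ordinary_svd A U s V"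
proof -
  define f where "f x = norm (A *v x)^2" for x
  obtain v1 where v1: "v1 \<in> sphere 0 1" "\<And>x. x \<in> sphere 0 1 \<Longrightarrow> f x \<le> f v1"
    using max_on[of "sphere 0 1" A] unfolding f_def
    by (metis closed_sphere empty_iff subset_refl norm_axis_1 mem_sphere_0)
  define W where "W = sphere 0 1 \<inter> {x. v1 \<bullet> x = 0}"
  have "W \<noteq> {}" using unit_orth_exists[of v1] v1(1) by (auto simp: W_def)
  moreover have "closed W" unfolding W_def by (intro closed_Int closed_sphere closed_hyperplane)
  ultimately obtain v2 where v2: "v2 \<in> W" "\<And>x. x \<in> W \<Longrightarrow> f x \<le> f v2"
    using max_on[of W A] unfolding f_def W_def by blast
  define v3 where "v3 = cr v1 v2"
  have n1: "v1 \<bullet> v1 = 1" using v1(1) by (simp add: norm_eq_1)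
  have n2: "v2 \<bullet> v2 = 1" "v1 \<bullet> v2 = 0" using v2(1) by (simp_all add: W_def norm_eq_1)
  have n3: "v1 \<bullet> v3 = 0" "v2 \<bullet> v3 = 0" unfolding v3_def by (simp_all add: cr_orth)
  have n33: "v3 \<bullet> v3 = 1" unfolding v3_def cr_norm n1 n2 by simp
  have v3W: "v3 \<in> W" using n33 n3 by (simp add: W_def norm_eq_1)
  have v2S: "v2 \<in> sphere 0 1" using v2(1) W_def by simp
  have h1: "f x \<le> f v1 * norm x ^ 2" for x
    unfolding f_def by (rule hom_max[where P = "\<lambda>_. True"]) (use v1 in \<open>auto simp: f_def\<close>)
  have h2: "f x \<le> f v2 * norm x ^ 2" if "v1 \<bullet> x = 0" for x
    unfolding f_def by (rule hom_max[where P = "\<lambda>x. v1 \<bullet> x = 0"]) (use v2 that in \<open>auto simp: f_def W_def\<close>)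
  have nv1: "norm v1 = 1" "norm v2 = 1" using v1(1) v2S by auto
  have o12: "(A *v v1) \<bullet> (A *v v2) = 0"
    by (rule lag[where lam = "f v1"]) (use h1 nv1 n2 in \<open>auto simp: f_def\<close>)
  have o13: "(A *v v1) \<bullet> (A *v v3) = 0"
    by (rule lag[where lam = "f v1"]) (use h1 nv1 n3 in \<open>auto simp: f_def\<close>)
  have o23: "(A *v v2) \<bullet> (A *v v3) = 0"
    by (rule lag[where lam = "f v2"]) (use h2 nv1 n2 n3 in \<open>auto simp: f_def inner_add_right\<close>)
  define s1 where "s1 = norm (A *v v1)"
  define s2 where "s2 = norm (A *v v2)"
  define s3 where "s3 = norm (A *v v3)"
  have "f v2 \<le> f v1" using v1(2) v2S by blast
  then have s12: "s2 \<le> s1" unfolding f_def s1_def s2_def by (simp add: power2_le_iff_abs_le)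
  have "f v3 \<le> f v2" using v2(2) v3W by blast
  then have s23: "s3 \<le> s2" unfolding f_def s2_def s3_def by (simp add: power2_le_iff_abs_le)
  have s3p: "s3 \<ge> 0" by (simp add: s3_def)
  obtain e where e: "norm e = 1" "(if s1 > 0 then (1/s1) *\<^sub>R (A *v v1) else axis 1 1) \<bullet> e = 0"
    using unit_orth_exists[of "if s1 > 0 then (1/s1) *\<^sub>R (A *v v1) else axis 1 1"]
    by (cases "s1 > 0") (auto simp: s1_def)
  define u1 where "u1 = (if s1 > 0 then (1/s1) *\<^sub>R (A *v v1) else axis 1 1)"
  define u2 where "u2 = (if s2 > 0 then (1/s2) *\<^sub>R (A *v v2) else e)"
  define u3 where "u3 = (if s3 > 0 then (1/s3) *\<^sub>R (A *v v3) else cr u1 u2)"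
  have sq: "(A *v v) \<bullet> (A *v v) = norm (A *v v)^2" for v by (simp add: power2_norm_eq_inner)
  have m1: "u1 \<bullet> u1 = 1" unfolding u1_def using sq[of v1] by (auto simp: s1_def power2_eq_square)
  have m2: "u2 \<bullet> u2 = 1" unfolding u2_def using sq[of v2] e(1) by (auto simp: s2_def power2_eq_square norm_eq_1)
  have m12: "u1 \<bullet> u2 = 0"
    using e(2) s12 o12 unfolding u1_def u2_def by (auto simp: inner_commute)
  have m3: "u3 \<bullet> u3 = 1" unfolding u3_def using sq[of v3] cr_norm[of u1 u2] m1 m2 m12
    by (auto simp: s3_def power2_eq_square)
  have m13: "u1 \<bullet> u3 = 0" using s12 s23 o13 cr_orth[of u1 u2] unfolding u1_def u3_def by auto
  have m23: "u2 \<bullet> u3 = 0"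
  proof (cases "s3 > 0")
    case True
    then have "s2 > 0" using s23 by simp
    then show ?thesis using True o23 by (simp add: u2_def u3_def)
  next
    case False
    then show ?thesis by (simp add: u3_def cr_orth)
  qed
  have z: "A *v v = 0" if "norm (A *v v) = 0" for v using that by simp
  have a1: "A *v v1 = s1 *\<^sub>R u1" unfolding u1_def using z[of v1] s1_def by auto
  have a2: "A *v v2 = s2 *\<^sub>R u2" unfolding u2_def using z[of v2] s2_def by auto
  have a3: "A *v v3 = s3 *\<^sub>R u3" unfolding u3_def using z[of v3] s3_def by auto
  define V where "V = transpose (vector [v1, v2, v3] :: real^3^3)"
  define U where "U = transpose (vector [u1, u2, u3] :: real^3^3)"
  define sv :: "real^3" where "sv = vector [s1, s2, s3]"
  have oV: "orthogonal_matrix V" unfolding V_def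
    by (rule gram_orth) (use n1 n2 n3 n33 in \<open>auto simp: inner_commute\<close>)
  have oU: "orthogonal_matrix U" unfolding U_def
    by (rule gram_orth) (use m1 m2 m3 m12 m13 m23 in \<open>auto\<close>)
  have AV: "A ** V = U ** diag3 sv"
  proof -
    have c: "(A *v v1)$i = s1 * u1$i" "(A *v v2)$i = s2 * u2$i" "(A *v v3)$i = s3 * u3$i" for i
      using a1 a2 a3 by simp_all
    show ?thesis unfolding vec_eq_iff forall_3 using c
      by (simp add: V_def U_def sv_def diag3_def matrix_matrix_mult_def matrix_vector_mult_def
            transpose_def sum_3 mult.commute)
  qed
  have "A = A ** (V ** transpose V)" using oV by (simp add: orthogonal_matrix_def)
  also have "\<dots> = U ** diag3 sv ** transpose V" by (simp add: matrix_mul_assoc AV)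
  finally have "ordinary_svd A U sv V"
    unfolding ordinary_svd_def using oU oV s12 s23 s3p by (simp add: sv_def)
  then show ?thesis by blast
qed




lemma cont_if_const [continuous_intros]:
  "continuous_on S f \<Longrightarrow> continuous_on S g \<Longrightarrow> continuous_on S (\<lambda>x. if P then f x else g x)"
  by (cases P) auto

lemma meas_restrict:
  assumes "continuous_on UNIV f" "\<And>x. x \<in> A \<Longrightarrow> f x \<in> B"
  shows "f \<in> measurable (restrict_space borel A) (restrict_space borel B)"
  by (rule measurable_restrict_space2)
     (use assms in \<open>auto intro: measurable_restrict_space1 borel_measurable_continuous_onI simp: space_restrict_space\<close>)

definition proj :: "real^4 \<Rightarrow> real^4" where
  "proj x = (if x = 0 then axis 1 1 else x /\<^sub>R norm x)"

definition Ub :: "(real^4) measure" where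
  "Ub = uniform_measure lborel (cball 0 1)"

lemma unif_eq: "unif_S3 = distr Ub (restrict_space borel S3) proj"
  by (simp add: unif_S3_def Ub_def proj_def[abs_def])

lemma proj_S3: "proj x \<in> S3"
  by (simp add: proj_def S3_def)

lemma sets_Ub [measurable_cong]: "sets Ub = sets borel"
  by (simp add: Ub_def)

lemma space_Ub: "space Ub = UNIV"
  by (simp add: Ub_def)

lemma proj_borel: "proj \<in> borel_measurable borel"
  unfolding proj_def[abs_def] by measurable

lemma proj_meas: "proj \<in> measurable Ub (restrict_space borel S3)"
  by (rule measurable_restrict_space2) (use proj_S3 proj_borel in \<open>auto simp: measurable_cong_sets[OF sets_Ub refl]\<close>)

lemma cball_pos: "emeasure lborel (cball (0::real^4) 1) \<noteq> 0"
proof -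
  have "emeasure lborel (cball (0::real^4) 1) = ennreal (measure lborel (cball (0::real^4) 1))"
    using emeasure_lborel_cball_finite[of "0::real^4" 1] by (intro emeasure_eq_ennreal_measure) auto
  then show ?thesis using content_cball_pos[of 1 "0::real^4"] by simp
qed

lemma Ub_prob: "prob_space Ub"
  unfolding Ub_def
proof (rule prob_space_uniform_measure)
  show "emeasure lborel (cball (0::real^4) 1) \<noteq> 0" by (rule cball_pos)
  show "emeasure lborel (cball (0::real^4) 1) \<noteq> \<infinity>"
    using emeasure_lborel_cball_finite[of "0::real^4" 1] by auto
qed

lemma unif_prob: "prob_space unif_S3"
  unfolding unif_eq by (rule prob_space.prob_space_distr[OF Ub_prob proj_meas])

lemma space_unif: "space unif_S3 = S3"
  by (simp add: unif_eq space_restrict_space)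

lemma sets_unif: "sets unif_S3 = sets (restrict_space borel S3)"
  by (simp add: unif_eq)

lemma lborel_orth:
  fixes g :: "real^4 \<Rightarrow> real^4"
  assumes g: "orthogonal_transformation g" and B: "B \<in> sets borel" and bB: "bounded B"
  shows "emeasure lborel (g -` B) = emeasure lborel B"
proof -
  have bij: "bij g" using g orthogonal_transformation_bij by blast
  have h: "orthogonal_transformation (inv g)" using g orthogonal_transformation_inv by blast
  have eq: "g -` B = inv g ` B" using bij by (rule bij_vimage_eq_inv_image)
  have gc: "continuous_on UNIV g" using g
    by (simp add: linear_continuous_on orthogonal_transformation_linear linear_linear)
  have gB: "g -` B \<in> sets borel"
    using borel_measurable_continuous_onI[OF gc] B by (simp add: measurable_sets_borel)
  have Bl: "B \<in> lmeasurable" using B bB by (intro bounded_set_imp_lmeasurable) auto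
  have m: "measure lebesgue (inv g ` B) = measure lebesgue B"
    by (rule measure_orthogonal_image[OF h Bl])
  then have m2: "measure lborel (g -` B) = measure lborel B"
    using B gB eq by simp
  have bgB: "bounded (g -` B)"
  proof -
    have "bounded_linear (inv g)"
      using orthogonal_transformation_linear[OF h] by (simp add: linear_conv_bounded_linear)
    then show ?thesis unfolding eq by (rule bounded_linear_image[OF bB])
  qed
  have fin: "emeasure lborel S < \<infinity>" if bS: "bounded S" for S :: "(real^4) set"
  proof -
    obtain r c where r: "S \<subseteq> cball c r" using bS[unfolded bounded_subset_cball] by auto
    have "emeasure lborel S \<le> emeasure lborel (cball c r)"
      by (rule emeasure_mono[OF r]) simp
    then show ?thesis using emeasure_lborel_cball_finite[of c r] by (simp add: le_less_trans)
  qed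
  show ?thesis
    using fin[OF bB] fin[OF bgB] m2 by (simp add: emeasure_eq_ennreal_measure)
qed

lemma orth_norm: "orthogonal_transformation g \<Longrightarrow> norm (g x) = norm x"
  by (simp add: orthogonal_transformation)

lemma orth_S3: "orthogonal_transformation g \<Longrightarrow> x \<in> S3 \<Longrightarrow> g x \<in> S3"
  by (simp add: S3_def orth_norm)

lemma orth_cont: "orthogonal_transformation (g :: real^4 \<Rightarrow> real^4) \<Longrightarrow> continuous_on UNIV g"
  by (simp add: linear_continuous_on orthogonal_transformation_linear linear_linear)

lemma orth_meas: "orthogonal_transformation g \<Longrightarrow> g \<in> measurable (restrict_space borel S3) (restrict_space borel S3)"
  by (rule meas_restrict) (simp_all add: orth_cont orth_S3)

lemma proj_orth:
  assumes g: "orthogonal_transformation g" and x: "x \<noteq> 0"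
  shows "g (proj x) = proj (g x)"
proof -
  have "g x \<noteq> 0" using orth_norm[OF g, of x] x by auto
  then show ?thesis using x orth_norm[OF g, of x]
    by (simp add: proj_def orthogonal_transformation_scaleR[OF g])
qed

lemma emeasure_Ub: "B \<in> sets borel \<Longrightarrow>
   emeasure Ub B = emeasure lborel (cball 0 1 \<inter> B) / emeasure lborel (cball (0::real^4) 1)"
  unfolding Ub_def by (subst emeasure_uniform_measure) auto

lemma unif_orth:
  assumes g: "orthogonal_transformation g"
  shows "distr unif_S3 (restrict_space borel S3) g = unif_S3"
proof (rule measure_eqI)
  show "sets (distr unif_S3 (restrict_space borel S3) g) = sets unif_S3" by (simp add: sets_unif)
  fix X assume "X \<in> sets (distr unif_S3 (restrict_space borel S3) g)"
  then have X: "X \<in> sets (restrict_space borel S3)" by simp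
  have gm: "g \<in> measurable unif_S3 (restrict_space borel S3)"
    using orth_meas[OF g] by (simp add: measurable_cong_sets[OF sets_unif refl])
  have gX: "g -` X \<inter> S3 \<in> sets (restrict_space borel S3)"
    using measurable_sets[OF orth_meas[OF g] X] by (simp add: space_restrict_space)
  define P1 where "P1 = {x. g (proj x) \<in> X}"
  define P2 where "P2 = {x. proj x \<in> X}"
  have P1: "P1 \<in> sets borel"
  proof -
    have "proj -` (g -` X \<inter> S3) \<inter> space Ub \<in> sets Ub" by (rule measurable_sets[OF proj_meas gX])
    moreover have "proj -` (g -` X \<inter> S3) \<inter> space Ub = P1" using proj_S3 by (auto simp: P1_def space_Ub)
    ultimately show ?thesis by (simp add: sets_Ub)
  qed
  have P2: "P2 \<in> sets borel"
  proof -
    have "proj -` X \<inter> space Ub \<in> sets Ub" by (rule measurable_sets[OF proj_meas X])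
    moreover have "proj -` X \<inter> space Ub = P2" by (auto simp: P2_def space_Ub)
    ultimately show ?thesis by (simp add: sets_Ub)
  qed
  have "emeasure (distr unif_S3 (restrict_space borel S3) g) X = emeasure unif_S3 (g -` X \<inter> S3)"
    by (simp add: emeasure_distr[OF gm X] space_unif)
  also have "\<dots> = emeasure Ub (proj -` (g -` X \<inter> S3) \<inter> space Ub)"
    unfolding unif_eq by (rule emeasure_distr[OF proj_meas gX])
  also have "proj -` (g -` X \<inter> S3) \<inter> space Ub = P1" using proj_S3 by (auto simp: P1_def space_Ub)
  finally have e1: "emeasure (distr unif_S3 (restrict_space borel S3) g) X = emeasure Ub P1" .
  have "emeasure unif_S3 X = emeasure Ub (proj -` X \<inter> space Ub)"
    unfolding unif_eq by (rule emeasure_distr[OF proj_meas X])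
  also have "proj -` X \<inter> space Ub = P2" by (auto simp: P2_def space_Ub)
  finally have e2: "emeasure unif_S3 X = emeasure Ub P2" .
  define Q2 where "Q2 = cball 0 1 \<inter> P2 - {0}"
  have Q2: "Q2 \<in> sets borel" "bounded Q2" using P2 by (auto simp: Q2_def intro: bounded_subset[OF bounded_cball])
  have "g -` Q2 = cball 0 1 \<inter> P1 - {0}"
  proof (intro set_eqI iffI)
    fix x assume "x \<in> g -` Q2"
    then have x: "g x \<noteq> 0" "norm (g x) \<le> 1" "proj (g x) \<in> X" by (auto simp: Q2_def P2_def)
    have "x \<noteq> 0" using x(1) orth_norm[OF g, of x] by auto
    then show "x \<in> cball 0 1 \<inter> P1 - {0}"
      using x orth_norm[OF g, of x] proj_orth[OF g] by (auto simp: P1_def)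
  next
    fix x assume "x \<in> cball 0 1 \<inter> P1 - {0}"
    then have x: "x \<noteq> 0" "norm x \<le> 1" "g (proj x) \<in> X" by (auto simp: P1_def)
    have "g x \<noteq> 0" using x(1) orth_norm[OF g, of x] by auto
    then show "x \<in> g -` Q2"
      using x orth_norm[OF g, of x] proj_orth[OF g x(1)] by (auto simp: Q2_def P2_def)
  qed
  then have "emeasure lborel (cball 0 1 \<inter> P1 - {0}) = emeasure lborel Q2"
    using lborel_orth[OF g Q2] by simp
  moreover have "emeasure lborel (cball 0 1 \<inter> P1 - {0}) = emeasure lborel (cball 0 1 \<inter> P1)"
    by (rule emeasure_Diff_null_set) (use P1 in \<open>auto intro: finite_imp_null_set_lborel\<close>)
  moreover have "emeasure lborel Q2 = emeasure lborel (cball 0 1 \<inter> P2)"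
    unfolding Q2_def by (rule emeasure_Diff_null_set) (use P2 in \<open>auto intro: finite_imp_null_set_lborel\<close>)
  ultimately have "emeasure lborel (cball 0 1 \<inter> P1) = emeasure lborel (cball 0 1 \<inter> P2)" by simp
  then show "emeasure (distr unif_S3 (restrict_space borel S3) g) X = emeasure unif_S3 X"
    unfolding e1 e2 using P1 P2 by (simp add: emeasure_Ub)
qed




lemma vector3_chi: "(vector [a, b, c] :: ('a::zero)^3) = (\<chi> i. if i = 1 then a else if i = 2 then b else c)"
  unfolding vec_eq_iff forall_3 by simp

lemma rot_cont: "continuous_on UNIV quat_to_rot"
  unfolding quat_to_rot_def[abs_def] Let_def vector3_chi
  by (intro continuous_intros continuous_on_vec_lambda)

definition eta :: "(real^3^3) measure" where
  "eta = distr unif_S3 (restrict_space borel SO3) quat_to_rot"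

lemma rot_meas: "quat_to_rot \<in> measurable (restrict_space borel S3) (restrict_space borel SO3)"
  by (rule meas_restrict) (simp_all add: rot_cont rot_SO3)

lemma rot_meas_u: "quat_to_rot \<in> measurable unif_S3 (restrict_space borel SO3)"
  using rot_meas by (simp add: measurable_cong_sets[OF sets_unif refl])

lemma eta_prob: "prob_space eta"
  unfolding eta_def by (rule prob_space.prob_space_distr[OF unif_prob rot_meas_u])

lemma sets_eta: "sets eta = sets (restrict_space borel SO3)"
  by (simp add: eta_def)

lemma space_eta: "space eta = SO3"
  by (simp add: eta_def space_restrict_space)

lemma mulL_cont: "continuous_on UNIV (\<lambda>R::real^3^3. Q ** R)"
  unfolding matrix_matrix_mult_def by (intro continuous_intros continuous_on_vec_lambda)

lemma mulR_cont: "continuous_on UNIV (\<lambda>R::real^3^3. R ** Q)"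
  unfolding matrix_matrix_mult_def by (intro continuous_intros continuous_on_vec_lambda)

lemma mulL_meas: "Q \<in> SO3 \<Longrightarrow> (\<lambda>R. Q ** R) \<in> measurable (restrict_space borel SO3) (restrict_space borel SO3)"
  by (rule meas_restrict) (simp_all add: mulL_cont SO3_mul)

lemma mulR_meas: "Q \<in> SO3 \<Longrightarrow> (\<lambda>R. R ** Q) \<in> measurable (restrict_space borel SO3) (restrict_space borel SO3)"
  by (rule meas_restrict) (simp_all add: mulR_cont SO3_mul)

lemma qmulL_orth: assumes "u \<in> S3" shows "orthogonal_transformation (\<lambda>q. qmul u q)"
proof -
  have "linear (\<lambda>q. qmul u q)"
    by (rule linearI) (simp_all add: qmul_def vec_eq_iff forall_4 algebra_simps)
  moreover have "sumsq u = 1" using assms by (simp add: S3_iff)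
  ultimately show ?thesis by (simp add: orthogonal_transformation norm_sumsq sumsq_qmul)
qed

lemma qmulR_orth: assumes "v \<in> S3" shows "orthogonal_transformation (\<lambda>q. qmul q v)"
proof -
  have "linear (\<lambda>q. qmul q v)"
    by (rule linearI) (simp_all add: qmul_def vec_eq_iff forall_4 algebra_simps)
  moreover have "sumsq v = 1" using assms by (simp add: S3_iff)
  ultimately show ?thesis by (simp add: orthogonal_transformation norm_sumsq sumsq_qmul)
qed

lemma eta_via:
  assumes g: "orthogonal_transformation g" and h: "\<And>q. q \<in> S3 \<Longrightarrow> f (quat_to_rot q) = quat_to_rot (g q)"
    and f: "f \<in> measurable (restrict_space borel SO3) (restrict_space borel SO3)"
  shows "distr eta (restrict_space borel SO3) f = eta"
proof -
  have gm: "g \<in> measurable unif_S3 (restrict_space borel S3)"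
    using orth_meas[OF g] by (simp add: measurable_cong_sets[OF sets_unif refl])
  have "distr eta (restrict_space borel SO3) f = distr unif_S3 (restrict_space borel SO3) (f \<circ> quat_to_rot)"
    unfolding eta_def by (rule distr_distr[OF f rot_meas_u])
  also have "\<dots> = distr unif_S3 (restrict_space borel SO3) (quat_to_rot \<circ> g)"
    by (rule distr_cong) (simp_all add: space_unif h)
  also have "\<dots> = distr (distr unif_S3 (restrict_space borel S3) g) (restrict_space borel SO3) quat_to_rot"
    by (rule distr_distr[OF rot_meas gm, symmetric])
  also have "\<dots> = eta" by (simp add: unif_orth[OF g] eta_def)
  finally show ?thesis .
qed

lemma eta_left: assumes Q: "Q \<in> SO3" shows "distr eta (restrict_space borel SO3) (\<lambda>R. Q ** R) = eta"
proof -
  obtain u where u: "u \<in> S3" "quat_to_rot u = Q" using rot_surj[OF Q] by blast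
  show ?thesis
    by (rule eta_via[OF qmulL_orth[OF u(1)] _ mulL_meas[OF Q]]) (simp add: rot_mul u)
qed

lemma eta_right: assumes Q: "Q \<in> SO3" shows "distr eta (restrict_space borel SO3) (\<lambda>R. R ** Q) = eta"
proof -
  obtain v where v: "v \<in> S3" "quat_to_rot v = Q" using rot_surj[OF Q] by blast
  show ?thesis
    by (rule eta_via[OF qmulR_orth[OF v(1)] _ mulR_meas[OF Q]]) (simp add: rot_mul v)
qed

lemma mm_cont: "continuous_on UNIV (\<lambda>p::((real^3^3) \<times> (real^3^3)). fst p ** snd p)"
  unfolding matrix_matrix_mult_def by (intro continuous_intros continuous_on_vec_lambda)

lemma haar_unique:
  assumes P: "prob_space \<mu>" and S: "sets \<mu> = sets (restrict_space borel SO3)"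
    and L: "\<forall>Q\<in>SO3. distr \<mu> \<mu> (\<lambda>R. Q ** R) = \<mu>"
  shows "\<mu> = eta"
proof -
  interpret m: prob_space \<mu> by (rule P)
  interpret e: prob_space eta by (rule eta_prob)
  interpret pp: pair_prob_space \<mu> eta by unfold_locales
  have sp: "space \<mu> = SO3" using sets_eq_imp_space_eq[OF S] by (simp add: space_restrict_space)
  have idm: "(\<lambda>x. x) \<in> measurable M borel" if "sets M = sets (restrict_space borel SO3)" for M :: "(real^3^3) measure"
    using measurable_restrict_space1[OF measurable_ident_sets[OF refl, of borel]]
    by (simp add: measurable_cong_sets[OF that refl])
  have sw: "(\<lambda>p. (snd p, fst p)) \<in> measurable (\<mu> \<Otimes>\<^sub>M eta) borel"
  proof -
    have "(\<lambda>p. (snd p, fst p)) \<in> measurable (\<mu> \<Otimes>\<^sub>M eta) (borel \<Otimes>\<^sub>M borel)"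
      by (intro measurable_Pair measurable_compose[OF measurable_snd idm[OF sets_eta]]
                 measurable_compose[OF measurable_fst idm[OF S]])
    then show ?thesis by (simp add: borel_prod)
  qed
  have mb: "(\<lambda>p. snd p ** fst p) \<in> borel_measurable (\<mu> \<Otimes>\<^sub>M eta)"
    using borel_measurable_continuous_on[OF mm_cont sw] by simp
  have mm: "(\<lambda>p. snd p ** fst p) \<in> measurable (\<mu> \<Otimes>\<^sub>M eta) (restrict_space borel SO3)"
    by (rule measurable_restrict_space2)
       (use mb in \<open>auto simp: space_pair_measure sp space_eta SO3_mul\<close>)
  show ?thesis
  proof (rule measure_eqI)
    show "sets \<mu> = sets eta" using S sets_eta by simp
    fix X assume X0: "X \<in> sets \<mu>"
    then have X: "X \<in> sets (restrict_space borel SO3)" using S by simp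
    define F :: "(real^3^3) \<times> (real^3^3) \<Rightarrow> ennreal" where "F p = indicator X (snd p ** fst p)" for p
    have Fm: "F \<in> borel_measurable (\<mu> \<Otimes>\<^sub>M eta)"
      unfolding F_def by (rule measurable_compose[OF mm borel_measurable_indicator[OF X]])
    have inner1: "(\<integral>\<^sup>+x. F (x, y) \<partial>\<mu>) = emeasure \<mu> X" if y: "y \<in> space eta" for y
    proof -
      have yS: "y \<in> SO3" using y space_eta by simp
      have ym: "(\<lambda>R. y ** R) \<in> measurable \<mu> \<mu>"
        using mulL_meas[OF yS] by (simp add: measurable_cong_sets[OF S S])
      have "emeasure \<mu> X = emeasure (distr \<mu> \<mu> (\<lambda>R. y ** R)) X" using L yS by simp
      also have "\<dots> = emeasure \<mu> ((\<lambda>R. y ** R) -` X \<inter> space \<mu>)"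
        by (rule emeasure_distr[OF ym X0])
      also have "\<dots> = (\<integral>\<^sup>+x. indicator ((\<lambda>R. y ** R) -` X \<inter> space \<mu>) x \<partial>\<mu>)"
        using measurable_sets[OF ym X0] by simp
      also have "\<dots> = (\<integral>\<^sup>+x. F (x, y) \<partial>\<mu>)"
        by (rule nn_integral_cong) (simp add: F_def indicator_def)
      finally show ?thesis by simp
    qed
    have inner2: "(\<integral>\<^sup>+y. F (x, y) \<partial>eta) = emeasure eta X" if x: "x \<in> space \<mu>" for x
    proof -
      have xS: "x \<in> SO3" using x sp by simp
      have xm: "(\<lambda>R. R ** x) \<in> measurable eta (restrict_space borel SO3)"
        using mulR_meas[OF xS] by (simp add: measurable_cong_sets[OF sets_eta refl])
      have "emeasure eta X = emeasure (distr eta (restrict_space borel SO3) (\<lambda>R. R ** x)) X"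
        using eta_right[OF xS] by simp
      also have "\<dots> = emeasure eta ((\<lambda>R. R ** x) -` X \<inter> space eta)"
        by (rule emeasure_distr[OF xm X])
      also have "\<dots> = (\<integral>\<^sup>+y. indicator ((\<lambda>R. R ** x) -` X \<inter> space eta) y \<partial>eta)"
        using measurable_sets[OF xm X] by simp
      also have "\<dots> = (\<integral>\<^sup>+y. F (x, y) \<partial>eta)"
        by (rule nn_integral_cong) (simp add: F_def indicator_def)
      finally show ?thesis by simp
    qed
    have "emeasure \<mu> X = (\<integral>\<^sup>+y. emeasure \<mu> X \<partial>eta)" by (simp add: e.emeasure_space_1)
    also have "\<dots> = (\<integral>\<^sup>+y. (\<integral>\<^sup>+x. F (x, y) \<partial>\<mu>) \<partial>eta)"
      by (rule nn_integral_cong) (simp add: inner1)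
    also have "\<dots> = (\<integral>\<^sup>+x. (\<integral>\<^sup>+y. F (x, y) \<partial>eta) \<partial>\<mu>)"
      by (rule pp.Fubini[OF Fm])
    also have "\<dots> = (\<integral>\<^sup>+x. emeasure eta X \<partial>\<mu>)"
      by (rule nn_integral_cong) (simp add: inner2)
    also have "\<dots> = emeasure eta X" by (simp add: m.emeasure_space_1)
    finally show "emeasure \<mu> X = emeasure eta X" .
  qed
qed

lemma Haar_eq: "Haar_SO3 = eta"
  unfolding Haar_SO3_def
proof (rule the_equality)
  have "distr eta eta (\<lambda>R. Q ** R) = eta" if "Q \<in> SO3" for Q
  proof -
    have "distr eta eta (\<lambda>R. Q ** R) = distr eta (restrict_space borel SO3) (\<lambda>R. Q ** R)"
      by (rule distr_cong) (simp_all add: sets_eta)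
    then show ?thesis using eta_left[OF that] by simp
  qed
  then show "prob_space eta \<and> sets eta = sets (restrict_space borel SO3) \<and>
      (\<forall>Q\<in>SO3. distr eta eta (\<lambda>R. Q ** R) = eta)"
    using eta_prob sets_eta by blast
next
  fix \<mu> assume "prob_space \<mu> \<and> sets \<mu> = sets (restrict_space borel SO3) \<and>
      (\<forall>Q\<in>SO3. distr \<mu> \<mu> (\<lambda>R. Q ** R) = \<mu>)"
  then show "\<mu> = eta" using haar_unique by blast
qed




lemma fix_sign:
  assumes oU: "orthogonal_matrix (U'::real^3^3)"
  shows "U' ** diag3 (vector [1, 1, det U']) \<in> SO3"
proof -
  have d: "det U' = 1 \<or> det U' = -1" by (rule det_orthogonal_matrix[OF oU])
  have dd: "det U' * det U' = 1" using d by auto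
  have oD: "orthogonal_matrix (diag3 (vector [1, 1, det U']))"
    unfolding orthogonal_matrix vec_eq_iff forall_3
    by (simp add: diag3_def transpose_def matrix_matrix_mult_def sum_3 mat_def dd)
  have "det (diag3 (vector [1, 1, det U'])) = det U'"
    by (simp add: det_3 diag3_def)
  then show ?thesis using oU oD dd
    by (simp add: SO3_def orthogonal_matrix_mul det_mul)
qed

lemma diag_fix:
  assumes "a * a = 1" "b * b = (1::real)"
  shows "diag3 (vector [1, 1, a]) ** diag3 (vector [x, y, a * b * z]) ** transpose (diag3 (vector [1, 1, b]))
       = diag3 (vector [x, y, z])"
  unfolding vec_eq_iff forall_3 using assms
  by (simp add: diag3_def transpose_def matrix_matrix_mult_def sum_3 algebra_simps)

lemma tr_cont: "continuous_on UNIV (\<lambda>R::real^3^3. trace (C - B ** R))"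
  unfolding trace_def matrix_matrix_mult_def by (intro continuous_intros)

lemma quad_cont: "continuous_on UNIV (\<lambda>q::real^4. - (q \<bullet> (K *v q)))"
  unfolding inner_vec_def matrix_vector_mult_def by (intro continuous_intros continuous_on_vec_lambda)

lemma lap_meas: "(\<lambda>t::real. exp (- sqrt t) / sqrt t) \<in> borel_measurable borel"
  by measurable

lemma RL_f_meas: "RL_f A \<in> borel_measurable borel"
proof -
  have "(\<lambda>R. (\<lambda>t. exp (- sqrt t) / sqrt t) (trace (proper_svd_S A - transpose A ** R))) \<in> borel_measurable borel"
    by (rule measurable_compose[OF borel_measurable_continuous_onI[OF tr_cont] lap_meas])
  then show ?thesis by (simp add: RL_f_def[abs_def] Let_def)
qed

lemma QL_f_meas: "QL_f M Z \<in> borel_measurable borel"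
proof -
  have "(\<lambda>q. (\<lambda>t. exp (- sqrt t) / sqrt t) (- (q \<bullet> ((M ** Z ** transpose M) *v q)))) \<in> borel_measurable borel"
    by (rule measurable_compose[OF borel_measurable_continuous_onI[OF quad_cont] lap_meas])
  then show ?thesis by (simp add: QL_f_def[abs_def] Let_def)
qed

theorem proposition4:
  fixes A :: "real^3^3"
  shows "\<exists>M z1 z2 z3. orthogonal_matrix M \<and>
    distr (QL M (diag4 (vector [0, z1, z2, z3]))) (restrict_space borel SO3) quat_to_rot = RL A"
proof -
  have ex: "\<exists>x. case x of (U', s, V') \<Rightarrow> ordinary_svd A U' s V'" using svd_exists by auto
  obtain U' s V' where sv: "(SOME (U', s, V'). ordinary_svd A U' s V') = (U', s, V')"
    by (cases "SOME (U', s, V'). ordinary_svd A U' s V'") auto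
  have os: "ordinary_svd A U' s V'" using someI_ex[OF ex] unfolding sv by simp
  define S where "S = diag3 (vector [s$1, s$2, det (U' ** V') * s$3])"
  have PS: "proper_svd_S A = S" by (simp add: proper_svd_S_def sv S_def)
  have oU': "orthogonal_matrix U'" and oV': "orthogonal_matrix V'"
    and A: "A = U' ** diag3 s ** transpose V'" using os by (auto simp: ordinary_svd_def)
  define U where "U = U' ** diag3 (vector [1, 1, det U'])"
  define V where "V = V' ** diag3 (vector [1, 1, det V'])"
  have U: "U \<in> SO3" unfolding U_def by (rule fix_sign[OF oU'])
  have V: "V \<in> SO3" unfolding V_def by (rule fix_sign[OF oV'])
  have du: "det U' * det U' = 1" using det_orthogonal_matrix[OF oU'] by auto
  have dv: "det V' * det V' = 1" using det_orthogonal_matrix[OF oV'] by auto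
  have "U ** S ** transpose V
      = U' ** (diag3 (vector [1, 1, det U']) ** diag3 (vector [s$1, s$2, det U' * det V' * s$3])
           ** transpose (diag3 (vector [1, 1, det V']))) ** transpose V'"
    by (simp add: U_def V_def S_def det_mul matrix_transpose_mul matrix_mul_assoc)
  also have "\<dots> = U' ** diag3 (vector [s$1, s$2, s$3]) ** transpose V'"
    by (simp add: diag_fix[OF du dv])
  also have "vector [s$1, s$2, s$3] = s" by (simp add: vec_eq_iff forall_3)
  finally have AU: "A = U ** S ** transpose V" using A by simp
  obtain M z1 z2 z3 where oM: "orthogonal_matrix M" and
    keq: "\<And>q. q \<in> S3 \<Longrightarrow> trace (S - transpose A ** quat_to_rot q) =
          - (q \<bullet> ((M ** diag4 (vector [0,z1,z2,z3]) ** transpose M) *v q))"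
    using key[OF U V AU[unfolded S_def]] unfolding S_def[symmetric] by blast
  define Z where "Z = diag4 (vector [0, z1, z2, z3])"
  have feq: "QL_f M Z q = RL_f A (quat_to_rot q)" if "q \<in> S3" for q
    using keq[OF that] by (simp add: QL_f_def RL_f_def Let_def PS Z_def)
  define CR where "CR = (\<integral>R. RL_f A R \<partial>Haar_SO3)"
  define h where "h R = ennreal (RL_f A R / CR)" for R
  have RLm: "RL_f A \<in> borel_measurable (restrict_space borel SO3)"
    by (rule measurable_restrict_space1[OF RL_f_meas])
  have hm: "h \<in> borel_measurable (restrict_space borel SO3)"
    unfolding h_def using RLm by measurable
  have CQ: "(\<integral>q. QL_f M Z q \<partial>unif_S3) = CR"
  proof -
    have "(\<integral>q. QL_f M Z q \<partial>unif_S3) = (\<integral>q. RL_f A (quat_to_rot q) \<partial>unif_S3)"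
      by (rule Bochner_Integration.integral_cong) (simp_all add: space_unif feq)
    also have "\<dots> = (\<integral>R. RL_f A R \<partial>eta)"
      unfolding eta_def by (rule integral_distr[OF rot_meas_u RLm, symmetric])
    finally show ?thesis by (simp add: CR_def Haar_eq)
  qed
  have gm: "(\<lambda>q. ennreal (QL_f M Z q / CR)) \<in> borel_measurable unif_S3"
  proof -
    have "QL_f M Z \<in> borel_measurable unif_S3"
      using measurable_restrict_space1[OF QL_f_meas] by (simp add: measurable_cong_sets[OF sets_unif refl])
    then show ?thesis by measurable
  qed
  have hgm: "(\<lambda>q. h (quat_to_rot q)) \<in> borel_measurable unif_S3"
    by (rule measurable_compose[OF rot_meas_u hm])
  have "QL M Z = density unif_S3 (\<lambda>q. ennreal (QL_f M Z q / CR))"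
    by (simp add: QL_def CQ)
  also have "\<dots> = density unif_S3 (\<lambda>q. h (quat_to_rot q))"
    by (rule density_cong[OF gm hgm], rule AE_I2) (simp add: space_unif feq h_def)
  finally have "distr (QL M Z) (restrict_space borel SO3) quat_to_rot
      = distr (density unif_S3 (\<lambda>q. h (quat_to_rot q))) (restrict_space borel SO3) quat_to_rot" by simp
  also have "\<dots> = density eta h"
    unfolding eta_def by (rule density_distr[OF hm rot_meas_u, symmetric])
  also have "\<dots> = RL A" unfolding RL_def Haar_eq h_def[abs_def] CR_def ..
  finally show ?thesis using oM unfolding Z_def by blast
qed


end
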